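(* In the setting of the anyon theory $\mathcal{T}$ generated by $c_i,\varphi_i$ ($i=1,\dots,M$) with data $N_i,t_i,p_{ij},n_i$ as below, define $\bar\varphi_i=\varphi_i^{-1}c_i^{2n_i/N_i}$ (so $\varphi_i\bar\varphi_i=c_i^{2n_i/N_i}$), $$a_i=\varphi_i\prod_{j=1}^{i}c_j^{p_{ji}N_j/N_{ij}},\qquad \bar a_i=\bar\varphi_i\prod_{j=i}^{M}c_j^{p_{ij}N_j/N_{ij}}.$$ Then $B_\theta(a_i,\bar a_j)=1$ for all $i,j$, and conversely every anyon type $b$ of $\mathcal{T}$ with $B_\theta(b,\bar a_j)=1$ for all $j$ lies in the subgroup generated by $\{a_i\}_{i=1}^M$. That is, the anyon types braiding trivially with all of $\bar{\mathcal{A}}=\langle\bar a_1,\dots,\bar a_M\rangle$ form exactly the subtheory $\mathcal{A}=\langle a_1,\dots,a_M\rangle$.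
   Context: Data: $N_i$ prime powers; $t_i\in\frac12\mathbb{Z}$ if $N_i$ even, $t_i\in\mathbb{Z}$ if $N_i$ odd; integers $p_{ij}=p_{ji}$ for $i\ne j$; $p_{ii}=\lfloor t_i\rfloor$; $N_{ij}=\gcd(N_i,N_j)$; $n_i=0$ if $t_i\in\mathbb{Z}$ and $n_i=N_i/2$ if $t_i\in\frac12+\mathbb{Z}$. $\mathcal{T}$ is the Abelian anyon theory with fusion group freely generated by $c_i,\varphi_i$ subject to $c_i^{N_i}=\varphi_i^{N_i}=1$, with $\theta(xy)=\theta(x)\theta(y)B_\theta(x,y)$, $B_\theta$ symmetric bimultiplicative, and $\theta(c_i)=1$, $\theta(\varphi_i)=e^{2\pi i n_i/N_i^2}$, $B_\theta(c_i,c_j)=1$, $B_\theta(\varphi_i,c_j)=e^{2\pi i\delta_{ij}/N_i}$, $B_\theta(\varphi_i,\varphi_j)=1$ for $i\ne j$. The braiding phase is $B_\theta(a,b)=\theta(ab)/(\theta(a)\theta(b))$. *)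

theory Defs
  imports "HOL-Analysis.Analysis" "HOL-Library.Product_Plus" "HOL-Library.Function_Algebras" "HOL-Number_Theory.Number_Theory"
begin

text \<open>Anyon types of T are encoded by exponent vectors: a pair (x, y) of integer
  functions stands for the product over i in 1..M of c_i^(x i) phi_i^(y i).
  Fusion is addition of exponent vectors (the pair/function additive group);
  two vectors denote the same anyon iff their entries agree mod N i for i in 1..M.\<close>

type_synonym anyon = "(nat \<Rightarrow> int) \<times> (nat \<Rightarrow> int)"

definition cpow :: "nat \<Rightarrow> int \<Rightarrow> anyon" where
  "cpow i k = ((\<lambda>j. if j = i then k else 0), (\<lambda>j. 0))"

definition phipow :: "nat \<Rightarrow> int \<Rightarrow> anyon" where
  "phipow i k = ((\<lambda>j. 0), (\<lambda>j. if j = i then k else 0))"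

definition zsmul :: "int \<Rightarrow> anyon \<Rightarrow> anyon" where
  "zsmul k a = ((\<lambda>j. k * fst a j), (\<lambda>j. k * snd a j))"

definition anyon_eq :: "nat \<Rightarrow> (nat \<Rightarrow> nat) \<Rightarrow> anyon \<Rightarrow> anyon \<Rightarrow> bool" where
  "anyon_eq M N a b \<longleftrightarrow> (\<forall>i\<in>{1..M}. [fst a i = fst b i] (mod int (N i)) \<and> [snd a i = snd b i] (mod int (N i)))"

definition nn :: "(nat \<Rightarrow> nat) \<Rightarrow> (nat \<Rightarrow> real) \<Rightarrow> nat \<Rightarrow> nat" where
  "nn N t i = (if t i \<in> \<int> then 0 else N i div 2)"

text \<open>Topological spin: the unique quadratic refinement with theta(c_i)=1,
  theta(phi_i)=exp(2 pi i n_i/N_i^2), B(c_i,c_j)=1, B(phi_i,c_j)=exp(2 pi i delta_ij/N_i),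
  B(phi_i,phi_j)=1 for i\<noteq>j:
  theta(prod c_i^x_i phi_i^y_i) = exp(2 pi i sum_i (n_i y_i^2/N_i^2 + x_i y_i/N_i)).\<close>
definition theta :: "nat \<Rightarrow> (nat \<Rightarrow> nat) \<Rightarrow> (nat \<Rightarrow> real) \<Rightarrow> anyon \<Rightarrow> complex" where
  "theta M N t a = exp (2 * complex_of_real pi * \<i> * complex_of_real
      (\<Sum>i\<in>{1..M}. real (nn N t i) * real_of_int ((snd a i)^2) / (real (N i))^2
                    + real_of_int (fst a i * snd a i) / real (N i)))"

definition braid :: "nat \<Rightarrow> (nat \<Rightarrow> nat) \<Rightarrow> (nat \<Rightarrow> real) \<Rightarrow> anyon \<Rightarrow> anyon \<Rightarrow> complex" where
  "braid M N t a b = theta M N t (a + b) / (theta M N t a * theta M N t b)"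

definition phibar :: "(nat \<Rightarrow> nat) \<Rightarrow> (nat \<Rightarrow> real) \<Rightarrow> nat \<Rightarrow> anyon" where
  "phibar N t i = phipow i (-1) + cpow i (int (2 * nn N t i div N i))"

definition avec :: "(nat \<Rightarrow> nat) \<Rightarrow> (nat \<Rightarrow> nat \<Rightarrow> int) \<Rightarrow> nat \<Rightarrow> anyon" where
  "avec N p i = phipow i 1 + (\<Sum>j\<in>{1..i}. cpow j (p j i * int (N j div gcd (N i) (N j))))"

definition abar :: "nat \<Rightarrow> (nat \<Rightarrow> nat) \<Rightarrow> (nat \<Rightarrow> real) \<Rightarrow> (nat \<Rightarrow> nat \<Rightarrow> int) \<Rightarrow> nat \<Rightarrow> anyon" where
  "abar M N t p i = phibar N t i + (\<Sum>j\<in>{i..M}. cpow j (p i j * int (N j div gcd (N i) (N j))))"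

end

theory Submission
  imports Defs
begin

lemma sum_fun_apply: "finite A \<Longrightarrow> (sum f A) k = (\<Sum>a\<in>A. f a k)"
  by (induction A rule: finite_induct) auto

lemma fst_sum_cpow: "finite A \<Longrightarrow> fst (\<Sum>j\<in>A. cpow j (f j)) k = (if k \<in> A then f k else 0)"
  by (simp add: fst_sum sum_fun_apply cpow_def)

lemma snd_sum_cpow: "finite A \<Longrightarrow> snd (\<Sum>j\<in>A. cpow j (f j)) k = 0"
  by (simp add: snd_sum sum_fun_apply cpow_def)

definition Sf :: "nat \<Rightarrow> (nat \<Rightarrow> nat) \<Rightarrow> (nat \<Rightarrow> real) \<Rightarrow> anyon \<Rightarrow> real" where
  "Sf M N t a = (\<Sum>i\<in>{1..M}. real (nn N t i) * real_of_int ((snd a i)^2) / (real (N i))^2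
                    + real_of_int (fst a i * snd a i) / real (N i))"

definition cross :: "nat \<Rightarrow> (nat \<Rightarrow> nat) \<Rightarrow> (nat \<Rightarrow> real) \<Rightarrow> anyon \<Rightarrow> anyon \<Rightarrow> real" where
  "cross M N t a b = (\<Sum>i\<in>{1..M}. 2 * real (nn N t i) * real_of_int (snd a i * snd b i) / (real (N i))^2
                    + real_of_int (fst a i * snd b i + fst b i * snd a i) / real (N i))"

lemma Sf_add: "Sf M N t (a + b) = Sf M N t a + Sf M N t b + cross M N t a b"
  unfolding Sf_def cross_def
  by (simp add: sum.distrib[symmetric] power2_sum algebra_simps add_divide_distrib diff_divide_distrib)

lemma braid_exp: "braid M N t a b = exp (2 * complex_of_real pi * \<i> * complex_of_real (cross M N t a b))"
proof -
  let ?c = "2 * complex_of_real pi * \<i>"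
  have th: "theta M N t x = exp (?c * complex_of_real (Sf M N t x))" for x
    unfolding theta_def Sf_def by simp
  have "theta M N t (a + b) = theta M N t a * theta M N t b * exp (?c * complex_of_real (cross M N t a b))"
    unfolding th Sf_add by (simp add: exp_add[symmetric] algebra_simps)
  then show ?thesis unfolding braid_def by (simp add: th)
qed

lemma fst_abar: "fst (abar M N t p j) k = (if k = j then int (2 * nn N t j div N j) else 0)
     + (if k \<in> {j..M} then p j k * int (N k div gcd (N j) (N k)) else 0)"
  unfolding abar_def phibar_def by (simp add: fst_sum_cpow) (simp add: phipow_def cpow_def)

lemma snd_abar: "snd (abar M N t p j) k = (if k = j then -1 else 0)"
  unfolding abar_def phibar_def by (simp add: snd_sum_cpow) (simp add: phipow_def cpow_def)

lemma fst_avec: "fst (avec N p i) k = (if k \<in> {1..i} then p k i * int (N k div gcd (N i) (N k)) else 0)"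
  unfolding avec_def by (simp add: fst_sum_cpow) (simp add: phipow_def)

lemma snd_avec: "snd (avec N p i) k = (if k = i then 1 else 0)"
  unfolding avec_def by (simp add: snd_sum_cpow) (simp add: phipow_def)

lemma div_gcd_ratio:
  fixes a b :: nat assumes "a > 0" "b > 0"
  shows "real (a div gcd b a) / real a = real (b div gcd b a) / real b"
proof -
  have g: "gcd b a > 0" using assms by simp
  have "real (a div gcd b a) = real a / real (gcd b a)" by (simp add: real_of_nat_div)
  moreover have "real (b div gcd b a) = real b / real (gcd b a)" by (simp add: real_of_nat_div)
  ultimately show ?thesis using assms g by simp
qed

lemma nn_e:
  assumes "odd (N j) \<longrightarrow> t j \<in> \<int>" "N j > 0"
  shows "2 * real (nn N t j) = real_of_int (int (2 * nn N t j div N j)) * real (N j)"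
proof (cases "t j \<in> \<int>")
  case True then show ?thesis by (simp add: nn_def)
next
  case False
  then have "even (N j)" using assms by auto
  then have e: "2 * (N j div 2) = N j" by simp
  then have "real (2 * (N j div 2)) = real (N j)" by (rule arg_cong)
  then have h: "2 * real (N j div 2) = real (N j)" by simp
  have "2 * nn N t j div N j = 1" using False e assms by (simp add: nn_def)
  then show ?thesis using h False by (simp add: nn_def)
qed

lemma sum_restrict_jM:
  fixes j M :: nat assumes "1 \<le> j" shows "(\<Sum>k\<in>{1..M}. if k \<in> {j..M} then f k else (0::'a::comm_monoid_add)) = sum f {j..M}"
proof -
  have "{1..M} \<inter> {j..M} = {j..M}" using assms by auto
  moreover have "(\<Sum>k\<in>{1..M}. if k \<in> {j..M} then f k else (0::'a)) = sum f ({1..M} \<inter> {j..M})"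
    by (rule sum.inter_restrict[symmetric]) simp
  ultimately show ?thesis by metis
qed

definition Ij :: "nat \<Rightarrow> (nat \<Rightarrow> nat) \<Rightarrow> (nat \<Rightarrow> nat \<Rightarrow> int) \<Rightarrow> nat \<Rightarrow> anyon \<Rightarrow> int" where
  "Ij M N p j b = - fst b j + (\<Sum>k\<in>{j..M}. p j k * snd b k * int (N j div gcd (N j) (N k)))"

lemma cross_abar:
  assumes j: "j \<in> {1..M}" and Npos: "\<forall>i\<in>{1..M}. N i > 0"
    and todd: "odd (N j) \<longrightarrow> t j \<in> \<int>"
  shows "cross M N t b (abar M N t p j) = real_of_int (Ij M N p j b) / real (N j)"
proof -
  let ?e = "int (2 * nn N t j div N j)"
  have Nj: "N j > 0" using j Npos by auto
  have ne: "2 * real (nn N t j) = real_of_int ?e * real (N j)" using nn_e[of N j t, OF todd Nj] .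
  have trm: "2 * real (nn N t k) * real_of_int (snd b k * snd (abar M N t p j) k) / (real (N k))^2
                    + real_of_int (fst b k * snd (abar M N t p j) k + fst (abar M N t p j) k * snd b k) / real (N k)
      = (if k = j then - real_of_int (fst b j) / real (N j) else 0)
        + (if k \<in> {j..M} then real_of_int (p j k * snd b k * int (N j div gcd (N j) (N k))) / real (N j) else 0)"
    if k: "k \<in> {1..M}" for k
  proof (cases "k = j")
    case True
    have "2 * real (nn N t j) * real_of_int (- snd b j) / (real (N j))^2
        = - real_of_int ?e * real_of_int (snd b j) / real (N j)"
      using ne Nj by (simp add: power2_eq_square field_simps)
    then show ?thesis using True j Nj by (simp add: fst_abar snd_abar field_simps) (metis)
  next
    case False
    have Nk: "N k > 0" using k Npos by auto
    have r: "real (N k div gcd (N j) (N k)) / real (N k) = real (N j div gcd (N j) (N k)) / real (N j)"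
      using div_gcd_ratio[OF Nk Nj] by simp
    have "real_of_int (p j k * int (N k div gcd (N j) (N k)) * snd b k) / real (N k)
        = real_of_int (p j k * snd b k) * (real (N k div gcd (N j) (N k)) / real (N k))" by simp
    also have "\<dots> = real_of_int (p j k * snd b k * int (N j div gcd (N j) (N k))) / real (N j)"
      unfolding r by simp
    finally show ?thesis using False by (simp add: fst_abar snd_abar)
  qed
  have "cross M N t b (abar M N t p j) = (\<Sum>k\<in>{1..M}. (if k = j then - real_of_int (fst b j) / real (N j) else 0)
        + (if k \<in> {j..M} then real_of_int (p j k * snd b k * int (N j div gcd (N j) (N k))) / real (N j) else 0))"
    unfolding cross_def using trm by (rule sum.cong[OF refl])
  also have "\<dots> = - real_of_int (fst b j) / real (N j)
     + (\<Sum>k\<in>{j..M}. real_of_int (p j k * snd b k * int (N j div gcd (N j) (N k))) / real (N j))"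
  proof -
    have j1: "1 \<le> j" using j by simp
    show ?thesis using j by (simp only: sum.distrib sum_restrict_jM[OF j1]) simp
  qed
  also have "\<dots> = real_of_int (Ij M N p j b) / real (N j)"
    unfolding Ij_def by (simp add: sum_divide_distrib[symmetric] add_divide_distrib diff_divide_distrib)
  finally show ?thesis .
qed

lemma Ij_avec:
  assumes i: "i \<in> {1..M}" and j: "j \<in> {1..M}"
  shows "Ij M N p j (avec N p i) = 0"
proof -
  have "(\<Sum>k\<in>{j..M}. p j k * snd (avec N p i) k * int (N j div gcd (N j) (N k)))
      = (\<Sum>k\<in>{j..M}. if k = i then p j i * int (N j div gcd (N j) (N i)) else 0)"
    by (rule sum.cong) (auto simp: snd_avec)
  also have "\<dots> = (if i \<in> {j..M} then p j i * int (N j div gcd (N j) (N i)) else 0)"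
    by simp
  finally show ?thesis using i j unfolding Ij_def by (auto simp: fst_avec gcd.commute[of "N i" "N j"])
qed

lemma exp_int:
  fixes r :: real
  assumes "exp (2 * complex_of_real pi * \<i> * complex_of_real r) = 1"
  shows "\<exists>n::int. r = of_int n"
proof -
  from assms obtain n :: int where "Im (2 * complex_of_real pi * \<i> * complex_of_real r) = of_int (2 * n) * pi"
    unfolding exp_eq_1 by blast
  then have "2 * pi * r = 2 * of_int n * pi" by simp
  then have "r = of_int n" using pi_gt_zero by (simp add: algebra_simps)
  then show ?thesis by blast
qed

theorem mainTheorem10:
  fixes M :: nat and N :: "nat \<Rightarrow> nat" and t :: "nat \<Rightarrow> real" and p :: "nat \<Rightarrow> nat \<Rightarrow> int"
  assumes N_pp: "\<forall>i\<in>{1..M}. primepow (N i)"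
    and t_half: "\<forall>i\<in>{1..M}. even (N i) \<longrightarrow> 2 * t i \<in> \<int>"
    and t_int: "\<forall>i\<in>{1..M}. odd (N i) \<longrightarrow> t i \<in> \<int>"
    and p_sym: "\<forall>i\<in>{1..M}. \<forall>j\<in>{1..M}. i \<noteq> j \<longrightarrow> p i j = p j i"
    and p_diag: "\<forall>i\<in>{1..M}. p i i = \<lfloor>t i\<rfloor>"
  shows "(\<forall>i\<in>{1..M}. \<forall>j\<in>{1..M}. braid M N t (avec N p i) (abar M N t p j) = 1)
       \<and> (\<forall>b :: anyon. (\<forall>j\<in>{1..M}. braid M N t b (abar M N t p j) = 1) \<longrightarrow>
            (\<exists>k :: nat \<Rightarrow> int. anyon_eq M N b (\<Sum>i\<in>{1..M}. zsmul (k i) (avec N p i))))"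
proof
  have Npos: "\<forall>i\<in>{1..M}. N i > 0"
  proof
    fix i assume "i \<in> {1..M}"
    then have "primepow (N i)" using N_pp by blast
    then show "N i > 0" using primepow_gt_Suc_0 by fastforce
  qed
  have cr: "cross M N t b (abar M N t p j) = real_of_int (Ij M N p j b) / real (N j)"
    if "j \<in> {1..M}" for j b
    using cross_abar[OF that Npos] t_int that by blast
  show "\<forall>i\<in>{1..M}. \<forall>j\<in>{1..M}. braid M N t (avec N p i) (abar M N t p j) = 1"
    by (simp add: braid_exp cr Ij_avec)
  show "\<forall>b :: anyon. (\<forall>j\<in>{1..M}. braid M N t b (abar M N t p j) = 1) \<longrightarrow>
            (\<exists>k :: nat \<Rightarrow> int. anyon_eq M N b (\<Sum>i\<in>{1..M}. zsmul (k i) (avec N p i)))"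
  proof (intro allI impI)
    fix b :: anyon
    assume H: "\<forall>j\<in>{1..M}. braid M N t b (abar M N t p j) = 1"
    have dv: "int (N j) dvd Ij M N p j b" if j: "j \<in> {1..M}" for j
    proof -
      have "exp (2 * complex_of_real pi * \<i> * complex_of_real (real_of_int (Ij M N p j b) / real (N j))) = 1"
        using H j by (simp add: braid_exp cr)
      then obtain n :: int where "real_of_int (Ij M N p j b) / real (N j) = of_int n"
        using exp_int by blast
      then have "real_of_int (Ij M N p j b) = of_int n * real (N j)"
        using Npos j by (simp add: field_simps)
      then have "Ij M N p j b = n * int (N j)" by (metis of_int_eq_iff of_int_mult of_int_of_nat_eq)
      then show ?thesis by simp
    qed
    let ?s = "\<Sum>i\<in>{1..M}. zsmul (snd b i) (avec N p i)"
    have fs: "fst ?s j = (\<Sum>k\<in>{j..M}. p j k * snd b k * int (N j div gcd (N j) (N k)))"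
      if j: "j \<in> {1..M}" for j
    proof -
      have "fst ?s j = (\<Sum>i\<in>{1..M}. snd b i * fst (avec N p i) j)"
        by (simp add: fst_sum sum_fun_apply zsmul_def)
      also have "\<dots> = (\<Sum>i\<in>{1..M}. if i \<in> {j..M} then p j i * snd b i * int (N j div gcd (N j) (N i)) else 0)"
        by (rule sum.cong) (use j in \<open>auto simp: fst_avec gcd.commute\<close>)
      also have "\<dots> = (\<Sum>k\<in>{j..M}. p j k * snd b k * int (N j div gcd (N j) (N k)))"
        using j by (intro sum_restrict_jM) simp
      finally show ?thesis .
    qed
    have ss: "snd ?s j = snd b j" if j: "j \<in> {1..M}" for j
    proof -
      have "snd ?s j = (\<Sum>i\<in>{1..M}. snd b i * snd (avec N p i) j)"
        by (simp add: snd_sum sum_fun_apply zsmul_def)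
      also have "\<dots> = (\<Sum>i\<in>{1..M}. if i = j then snd b j else 0)"
        by (rule sum.cong) (auto simp: snd_avec)
      also have "\<dots> = snd b j" using j by simp
      finally show ?thesis .
    qed
    have "anyon_eq M N b ?s"
      unfolding anyon_eq_def
    proof
      fix j assume j: "j \<in> {1..M}"
      have "[fst b j = fst ?s j] (mod int (N j))"
        using dv[OF j] unfolding fs[OF j] Ij_def cong_iff_dvd_diff
        by (metis dvd_minus_iff minus_diff_eq uminus_add_conv_diff)
      then show "[fst b j = fst ?s j] (mod int (N j)) \<and> [snd b j = snd ?s j] (mod int (N j))"
        using ss[OF j] by simp
    qed
    then show "\<exists>k :: nat \<Rightarrow> int. anyon_eq M N b (\<Sum>i\<in>{1..M}. zsmul (k i) (avec N p i))" by blast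
  qed
qed

end
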